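(* Fix parameters $(\lambda,\mu,c,r)$ and let $n^*=n^*(\lambda,\mu,c,r)$ be the socially optimal threshold. Under every queuing regime, for every customer whose position in the queue is not larger than $n^*$, staying (rather than reneging) is a weakly dominant action. If $D_{n^*}>0$, then it is strictly dominant.
   Context: Model: an M/M/1 queue with a single server; customers arrive according to a Poisson process with rate $\lambda>0$ and are served at exponential rate $\mu>0$. Each customer incurs cost at rate $c>0$ while in the system and receives reward $r>0$ upon service completion; a customer who reneges gets continuation payoff $0$. A customer's payoff is expected reward minus expected waiting cost. Queuing regime: customers present are ranked in a queue, position $1$ being served (the server always serves someone when the system is non-idle) and the last position at the back. On arrival, the regime places the new customer at some position (possibly depending on a regime state); service completion removes the customer at position $1$; any customer may renege at any time. None of these events changes the relative order of the remaining customers. Definition of $D_n$: for $n\ge1$, let $(y_k)_{k\ge0}$ be the Markov chain on $\{0,\dots,n\}$ with $y_0=n$ and, independently at each step, $y_k=\min(y_{k-1}+1,n)$ with probability $\lambda/(\lambda+\mu)$ and $y_k=\max(y_{k-1}-1,0)$ with probability $\mu/(\lambda+\mu)$. Let $\theta_n$ be the probability that, starting at $y_0=n$, the chain $y_1,y_2,\dots$ reaches $0$ before it reaches $n$, and $T_n$ the expected number of steps until the chain $y_1,y_2,\dots$ reaches $0$ or $n$. Set $D_n=r\,\theta_n-\frac{c}{\lambda+\mu}T_n$; $D_n$ is decreasing in $n$. Social optimum: the designer maximizes the long-run average welfare (reward $r$ per service minus cost $c$ per unit time per customer present) by a threshold policy admitting customers as long as their number is at most a threshold; the optimal threshold $n^*(\lambda,\mu,c,r)$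 satisfies $D_{n^*}\ge0$ and $D_{n^*+1}\le0$. *)

theory Defs
  imports "HOL-Probability.Probability"
begin

definition up_st :: "nat \<Rightarrow> nat \<Rightarrow> nat" where
  "up_st n i = min (i + 1) n"

definition down_st :: "nat \<Rightarrow> nat \<Rightarrow> nat" where
  "down_st n i = max (i - 1) 0"

text \<open>hit0_fin lam mu n N i: probability that the chain started at state i (time 0) has its first
 visit to the set {0,n} at time at most N and that this visit is to 0.\<close>
primrec hit0_fin :: "real \<Rightarrow> real \<Rightarrow> nat \<Rightarrow> nat \<Rightarrow> nat \<Rightarrow> real" where
  "hit0_fin lam mu n 0 i = (if i = 0 then 1 else 0)"
| "hit0_fin lam mu n (Suc N) i =
     (if i = 0 then 1 else if i = n then 0
      else lam / (lam + mu) * hit0_fin lam mu n N (up_st n i)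
         + mu / (lam + mu) * hit0_fin lam mu n N (down_st n i))"

text \<open>steps_fin lam mu n N i: expectation of min(tau, N), tau the hitting time of {0,n} from i.\<close>
primrec steps_fin :: "real \<Rightarrow> real \<Rightarrow> nat \<Rightarrow> nat \<Rightarrow> nat \<Rightarrow> real" where
  "steps_fin lam mu n 0 i = 0"
| "steps_fin lam mu n (Suc N) i =
     (if i = 0 \<or> i = n then 0
      else 1 + lam / (lam + mu) * steps_fin lam mu n N (up_st n i)
             + mu / (lam + mu) * steps_fin lam mu n N (down_st n i))"

text \<open>theta_n: probability that, starting at y_0 = n, the chain y_1, y_2, ... reaches 0 before n.\<close>
definition theta :: "real \<Rightarrow> real \<Rightarrow> nat \<Rightarrow> real" where
  "theta lam mu n = lim (\<lambda>N. lam / (lam + mu) * hit0_fin lam mu n N (up_st n n)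
                            + mu / (lam + mu) * hit0_fin lam mu n N (down_st n n))"

text \<open>T_n: expected number of steps until y_1, y_2, ... reaches 0 or n (y_1 is step 1).\<close>
definition Tsteps :: "real \<Rightarrow> real \<Rightarrow> nat \<Rightarrow> real" where
  "Tsteps lam mu n = lim (\<lambda>N. 1 + lam / (lam + mu) * steps_fin lam mu n N (up_st n n)
                               + mu / (lam + mu) * steps_fin lam mu n N (down_st n n))"

definition D :: "real \<Rightarrow> real \<Rightarrow> real \<Rightarrow> real \<Rightarrow> nat \<Rightarrow> real" where
  "D lam mu c r n = r * theta lam mu n - c / (lam + mu) * Tsteps lam mu n"

definition opt_threshold :: "real \<Rightarrow> real \<Rightarrow> real \<Rightarrow> real \<Rightarrow> nat \<Rightarrow> bool" where
  "opt_threshold lam mu c r n \<longleftrightarrow> D lam mu c r n \<ge> 0 \<and> D lam mu c r (Suc n) \<le> 0"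

text \<open>Time is observed at the event epochs (arrivals at rate lam, service completions at rate mu;
 the server is busy since the tagged customer is present).  A history record (k, b, e) says:
 after reneging of other customers the tagged customer was at position k, the regime's placement
 choice was b (True = the arriving customer is placed ahead of the tagged one), and the event
 was an arrival (e = True) or a service completion (e = False).

 A behaviour of the regime and of the other customers is a history-dependent randomised choice
 (pmf) of the tagged customer's position after others' reneging (any k with 1 \<le> k \<le> current
 position; illegal values are read as "nobody reneges") together with the placement of a
 possible arrival.  A strategy of the tagged customer says, after each history, whether to
 renege (True) or stay (False).\<close>

type_synonym hrec = "nat \<times> bool \<times> bool"

type_synonym adversary = "hrec list \<Rightarrow> (nat \<times> bool) pmf"

type_synonym tstrategy = "hrec list \<Rightarrow> bool"

definition legal_pos :: "nat \<Rightarrow> nat \<Rightarrow> nat" where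
  "legal_pos pos k = (if 1 \<le> k \<and> k \<le> pos then k else pos)"

text \<open>Expected payoff (reward r at service completion minus cost c per unit time, 0 after
 reneging) of the tagged customer currently at position pos, truncated after N events (the
 customer is treated as leaving with continuation payoff 0 after N events).  Each inter-event
 time has mean 1/(lam+mu).\<close>
primrec payoff_fin ::
  "real \<Rightarrow> real \<Rightarrow> real \<Rightarrow> real \<Rightarrow> nat \<Rightarrow> tstrategy \<Rightarrow> adversary \<Rightarrow> hrec list \<Rightarrow> nat \<Rightarrow> real" where
  "payoff_fin lam mu c r 0 \<sigma> A h pos = 0"
| "payoff_fin lam mu c r (Suc N) \<sigma> A h pos =
     (if \<sigma> h then 0 else
      measure_pmf.expectation (A h) (\<lambda>(k, b).
        - c / (lam + mu)
        + lam / (lam + mu) *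
            payoff_fin lam mu c r N \<sigma> A (h @ [(legal_pos pos k, b, True)])
              (if b then legal_pos pos k + 1 else legal_pos pos k)
        + mu / (lam + mu) *
            (if legal_pos pos k = 1 then r
             else payoff_fin lam mu c r N \<sigma> A (h @ [(legal_pos pos k, b, False)])
                    (legal_pos pos k - 1))))"

definition has_payoff ::
  "real \<Rightarrow> real \<Rightarrow> real \<Rightarrow> real \<Rightarrow> tstrategy \<Rightarrow> adversary \<Rightarrow> nat \<Rightarrow> real \<Rightarrow> bool" where
  "has_payoff lam mu c r \<sigma> A pos L \<longleftrightarrow> (\<lambda>N. payoff_fin lam mu c r N \<sigma> A [] pos) \<longlonglongrightarrow> L"

end

theory Submission
  imports Defs
begin

definition itg :: "real \<Rightarrow> real \<Rightarrow> real \<Rightarrow> real \<Rightarrow> (hrec list \<Rightarrow> nat \<Rightarrow> real) \<Rightarrow> hrec list \<Rightarrow> nat \<Rightarrow> nat \<times> bool \<Rightarrow> real" where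
"itg p q a rr F h pos x = (case x of (k, b) \<Rightarrow>
   a + p * F (h @ [(legal_pos pos k, b, True)]) (if b then legal_pos pos k + 1 else legal_pos pos k)
   + q * (if legal_pos pos k = 1 then rr else F (h @ [(legal_pos pos k, b, False)]) (legal_pos pos k - 1)))"

definition stp :: "real \<Rightarrow> real \<Rightarrow> tstrategy \<Rightarrow> adversary \<Rightarrow> real \<Rightarrow> real \<Rightarrow> (hrec list \<Rightarrow> nat \<Rightarrow> real) \<Rightarrow> hrec list \<Rightarrow> nat \<Rightarrow> real" where
"stp p q \<sigma> A a rr F h pos = (if \<sigma> h then 0 else measure_pmf.expectation (A h) (itg p q a rr F h pos))"

definition bndB :: "real \<Rightarrow> (hrec list \<Rightarrow> nat \<Rightarrow> real) \<Rightarrow> bool" where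
"bndB B F \<longleftrightarrow> (\<forall>h pos. \<bar>F h pos\<bar> \<le> B)"

lemma payoff_stp:
  "payoff_fin lam mu c r (Suc N) \<sigma> A h pos
   = stp (lam/(lam+mu)) (mu/(lam+mu)) \<sigma> A (- c / (lam + mu)) r (payoff_fin lam mu c r N \<sigma> A) h pos"
  unfolding stp_def itg_def by (simp add: case_prod_beta)

lemma itg_bound:
  assumes "bndB B F" "p \<ge> 0" "q \<ge> 0"
  shows "\<bar>itg p q a rr F h pos x\<bar> \<le> \<bar>a\<bar> + p * B + q * (\<bar>rr\<bar> + B)"
proof -
  obtain k b where x: "x = (k, b)" by (cases x)
  define l where "l = legal_pos pos k"
  define u where "u = F (h @ [(l, b, True)]) (if b then l + 1 else l)"
  define w where "w = (if l = 1 then rr else F (h @ [(l, b, False)]) (l - 1))"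
  have u: "\<bar>u\<bar> \<le> B" using assms(1) unfolding bndB_def u_def by blast
  have B0: "B \<ge> 0" using assms(1) unfolding bndB_def by (meson abs_ge_zero order_trans)
  have w: "\<bar>w\<bar> \<le> \<bar>rr\<bar> + B"
  proof (cases "l = 1")
    case True thus ?thesis using B0 by (simp add: w_def)
  next
    case False
    then have "w = F (h @ [(l, b, False)]) (l - 1)" by (simp add: w_def)
    moreover have "\<bar>F (h @ [(l, b, False)]) (l - 1)\<bar> \<le> B" using assms(1) unfolding bndB_def by blast
    ultimately show ?thesis by (smt (verit) abs_ge_zero)
  qed
  have e: "itg p q a rr F h pos x = a + p * u + q * w"
    unfolding itg_def x u_def w_def l_def by simp
  have "\<bar>p * u\<bar> \<le> p * B" using u assms(2) by (simp add: abs_mult mult_left_mono)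
  moreover have "\<bar>q * w\<bar> \<le> q * (\<bar>rr\<bar> + B)" using w assms(3) by (simp add: abs_mult mult_left_mono)
  ultimately show ?thesis unfolding e by linarith
qed

lemma itg_integrable:
  assumes "bndB B F" "p \<ge> 0" "q \<ge> 0"
  shows "integrable (measure_pmf M) (itg p q a rr F h pos)"
  apply (rule measure_pmf.integrable_const_bound[where B="\<bar>a\<bar> + p * B + q * (\<bar>rr\<bar> + B)"])
  using itg_bound[OF assms] by auto

lemma stp_mono:
  assumes "bndB B1 F" "bndB B2 G" "p \<ge> 0" "q \<ge> 0"
    and "\<And>k b. itg p q a1 r1 F h pos (k, b) \<le> itg p q a2 r2 G h pos (k, b)"
  shows "stp p q \<sigma> A a1 r1 F h pos \<le> stp p q \<sigma> A a2 r2 G h pos"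
  unfolding stp_def
  using assms by (auto intro!: integral_mono itg_integrable)

lemma stp_ge_const:
  assumes "bndB B F" "p \<ge> 0" "q \<ge> 0" "\<not> \<sigma> h"
    and "\<And>k b. K \<le> itg p q a rr F h pos (k, b)"
  shows "K \<le> stp p q \<sigma> A a rr F h pos"
proof -
  have "measure_pmf.expectation (A h) (\<lambda>_. K) \<le> measure_pmf.expectation (A h) (itg p q a rr F h pos)"
  proof (rule integral_mono)
    show "integrable (measure_pmf (A h)) (itg p q a rr F h pos)" using assms(1-3) by (rule itg_integrable)
    show "K \<le> itg p q a rr F h pos x" for x using assms(5) by (cases x) auto
  qed simp
  moreover have "measure_pmf.expectation (A h) (\<lambda>_. K) = K" by simp
  ultimately show ?thesis using assms(4) unfolding stp_def by simp
qed

lemma stp_le_const: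
  assumes "bndB B F" "p \<ge> 0" "q \<ge> 0" "K \<ge> 0"
    and "\<And>k b. itg p q a rr F h pos (k, b) \<le> K"
  shows "stp p q \<sigma> A a rr F h pos \<le> K"
proof -
  have "measure_pmf.expectation (A h) (itg p q a rr F h pos) \<le> measure_pmf.expectation (A h) (\<lambda>_. K)"
  proof (rule integral_mono)
    show "integrable (measure_pmf (A h)) (itg p q a rr F h pos)" using assms(1-3) by (rule itg_integrable)
    show "itg p q a rr F h pos x \<le> K" for x using assms(5) by (cases x) auto
  qed simp
  moreover have "measure_pmf.expectation (A h) (\<lambda>_. K) = K" by simp
  ultimately show ?thesis using assms(4) unfolding stp_def by simp
qed

lemma stp_lin:
  assumes "bndB B1 F" "bndB B2 G" "p \<ge> 0" "q \<ge> 0"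
  shows "stp p q \<sigma> A aF rF F h pos - M * stp p q \<sigma> A aG rG G h pos
       = stp p q \<sigma> A (aF - M * aG) (rF - M * rG) (\<lambda>h pos. F h pos - M * G h pos) h pos"
proof (cases "\<sigma> h")
  case True then show ?thesis by (simp add: stp_def)
next
  case False
  have i1: "integrable (measure_pmf (A h)) (itg p q aF rF F h pos)"
    by (rule itg_integrable[OF assms(1,3,4)])
  have i2: "integrable (measure_pmf (A h)) (\<lambda>x. M * itg p q aG rG G h pos x)"
    using itg_integrable[OF assms(2,3,4)] by simp
  have eq: "itg p q (aF - M * aG) (rF - M * rG) (\<lambda>h pos. F h pos - M * G h pos) h pos
      = (\<lambda>x. itg p q aF rF F h pos x - M * itg p q aG rG G h pos x)"
    by (rule ext) (auto simp: itg_def algebra_simps split: prod.splits)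
  show ?thesis using False unfolding stp_def eq
    by (simp add: Bochner_Integration.integral_diff[OF i1 i2])
qed

lemma stp_scale:
  shows "stp p q \<sigma> A (M * a) (M * rr) (\<lambda>h pos. M * F h pos) h pos = M * stp p q \<sigma> A a rr F h pos"
proof (cases "\<sigma> h")
  case True then show ?thesis by (simp add: stp_def)
next
  case False
  have eq: "itg p q (M * a) (M * rr) (\<lambda>h pos. M * F h pos) h pos = (\<lambda>x. M * itg p q a rr F h pos x)"
    by (rule ext) (auto simp: itg_def algebra_simps split: prod.splits)
  show ?thesis using False unfolding stp_def eq by simp
qed

lemma bndB_nonneg: "bndB B F \<Longrightarrow> B \<ge> 0"
  unfolding bndB_def by (meson abs_ge_zero order_trans)

lemma stp_abs:
  assumes "bndB B F" "p \<ge> 0" "q \<ge> 0"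
  shows "\<bar>stp p q \<sigma> A a rr F h pos\<bar> \<le> \<bar>a\<bar> + p * B + q * (\<bar>rr\<bar> + B)"
proof (cases "\<sigma> h")
  case True
  have "B \<ge> 0" using bndB_nonneg[OF assms(1)] .
  then show ?thesis using True assms by (simp add: stp_def)
next
  case False
  have B0: "B \<ge> 0" using bndB_nonneg[OF assms(1)] .
  have K0: "0 \<le> \<bar>a\<bar> + p * B + q * (\<bar>rr\<bar> + B)" using B0 assms by simp
  have "stp p q \<sigma> A a rr F h pos \<le> \<bar>a\<bar> + p * B + q * (\<bar>rr\<bar> + B)"
  proof (rule stp_le_const[OF assms K0])
    fix k b show "itg p q a rr F h pos (k, b) \<le> \<bar>a\<bar> + p * B + q * (\<bar>rr\<bar> + B)"
      using itg_bound[OF assms, of a rr h pos "(k,b)"] by arith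
  qed
  moreover have "- (\<bar>a\<bar> + p * B + q * (\<bar>rr\<bar> + B)) \<le> stp p q \<sigma> A a rr F h pos"
  proof (rule stp_ge_const[where \<sigma>=\<sigma> and h=h, OF assms False])
    fix k b show "- (\<bar>a\<bar> + p * B + q * (\<bar>rr\<bar> + B)) \<le> itg p q a rr F h pos (k, b)"
      using itg_bound[OF assms, of a rr h pos "(k,b)"] by arith
  qed
  ultimately show ?thesis by linarith
qed

lemma legal_le: "legal_pos pos k \<le> pos"
  by (simp add: legal_pos_def)
lemma legal_ge: "1 \<le> pos \<Longrightarrow> 1 \<le> legal_pos pos k"
  by (simp add: legal_pos_def)

definition curpos :: "nat \<Rightarrow> hrec list \<Rightarrow> nat" where
"curpos k0 h = (if h = [] then k0 else (case last h of (l, b, e) \<Rightarrow> if e then (if b then l + 1 else l) else l - 1))"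

lemma curpos_up[simp]: "curpos k0 (h @ [(l, b, True)]) = (if b then l + 1 else l)"
  by (simp add: curpos_def)
lemma curpos_down[simp]: "curpos k0 (h @ [(l, b, False)]) = l - 1"
  by (simp add: curpos_def)

lemma itg_mono_succ:
  assumes "p \<ge> 0" "q \<ge> 0" "a1 \<le> a2" "r1 \<le> r2" "1 \<le> pos"
    and up: "\<And>l b. 1 \<le> l \<Longrightarrow> l \<le> pos \<Longrightarrow> F (h @ [(l, b, True)]) (if b then l + 1 else l) \<le> G (h @ [(l, b, True)]) (if b then l + 1 else l)"
    and dn: "\<And>l b. 2 \<le> l \<Longrightarrow> l \<le> pos \<Longrightarrow> F (h @ [(l, b, False)]) (l - 1) \<le> G (h @ [(l, b, False)]) (l - 1)"
  shows "itg p q a1 r1 F h pos (k, b) \<le> itg p q a2 r2 G h pos (k, b)"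
proof -
  define l where "l = legal_pos pos k"
  have l1: "1 \<le> l" and lp: "l \<le> pos" using assms(5) legal_ge legal_le l_def by auto
  have "p * F (h @ [(l, b, True)]) (if b then l + 1 else l) \<le> p * G (h @ [(l, b, True)]) (if b then l + 1 else l)"
    using up[OF l1 lp] assms(1) by (rule mult_left_mono)
  moreover have "q * (if l = 1 then r1 else F (h @ [(l, b, False)]) (l - 1)) \<le> q * (if l = 1 then r2 else G (h @ [(l, b, False)]) (l - 1))"
  proof (cases "l = 1")
    case True then show ?thesis using assms(2,4) by (simp add: mult_left_mono)
  next
    case False then have "2 \<le> l" using l1 by simp
    then show ?thesis using False dn[OF _ lp] assms(2) by (simp add: mult_left_mono)
  qed
  ultimately show ?thesis using assms(3) unfolding itg_def prod.case l_def[symmetric] by linarith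
qed

lemma itg_mono_all:
  assumes "p \<ge> 0" "q \<ge> 0" "a1 \<le> a2" "r1 \<le> r2" "\<And>h pos. F h pos \<le> G h pos"
  shows "itg p q a1 r1 F h pos x \<le> itg p q a2 r2 G h pos x"
proof -
  obtain k b where x: "x = (k, b)" by (cases x)
  show ?thesis unfolding x itg_def using assms
    by (auto intro!: add_mono mult_left_mono)
qed

lemma geo_div:
  fixes \<beta> :: real
  assumes "0 < \<beta>" "\<beta> < 1" "n \<ge> 1"
  shows "\<beta> ^ (i div n) \<le> (\<beta> powr (1 / real n)) ^ i / \<beta>"
proof -
  have e1: "(\<beta> powr (1 / real n)) ^ i = \<beta> powr (real i / real n)"
    using assms by (simp add: powr_power)
  have "i < (i div n + 1) * n" using assms(3)
    by (metis add.commute div_less_iff_less_mult less_add_one less_le_trans zero_less_one)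
  then have "real i < (real (i div n) + 1) * real n"
    by (metis of_nat_add of_nat_less_iff of_nat_mult of_nat_1)
  then have le: "real i / real n \<le> real (i div n) + 1" using assms(3)
    by (simp add: divide_le_eq)
  have "\<beta> powr (real (i div n) + 1) \<le> \<beta> powr (real i / real n)"
    using powr_mono'[OF le] assms by simp
  moreover have "\<beta> powr (real (i div n) + 1) = \<beta> ^ (i div n) * \<beta>"
    using assms by (simp add: powr_add powr_realpow)
  ultimately have "\<beta> ^ (i div n) * \<beta> \<le> (\<beta> powr (1 / real n)) ^ i" using e1 by simp
  then show ?thesis using assms by (simp add: le_divide_eq)
qed

locale tq =
  fixes lam mu c r :: real and A :: adversary and n k0 :: nat
  assumes lam: "lam > 0" and mu: "mu > 0" and cpos: "c > 0" and rpos: "r > 0" and n1: "n \<ge> 1"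
begin

definition "p = lam / (lam + mu)"
definition "q = mu / (lam + mu)"
definition "cc = c / (lam + mu)"

definition sg :: tstrategy where "sg h = (n < curpos k0 h)"

abbreviation "P N \<equiv> payoff_fin lam mu c r N sg A"

lemma p0: "p \<ge> 0" using lam mu by (simp add: p_def)
lemma q0: "q > 0" using lam mu by (simp add: q_def)
lemma pq1: "p + q = 1" using lam mu by (simp add: p_def q_def add_divide_distrib[symmetric])
lemma q1: "q < 1" using lam mu by (simp add: q_def)
lemma cc0: "cc > 0" using lam mu cpos by (simp add: cc_def)
declare payoff_fin.simps(2)[simp del]

lemma P_Suc: "P (Suc N) h pos = stp p q sg A (- cc) r (P N) h pos"
  unfolding payoff_stp p_def q_def cc_def by simp

primrec surv :: "nat \<Rightarrow> hrec list \<Rightarrow> nat \<Rightarrow> real" where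
  "surv 0 h pos = (if sg h then 0 else 1)"
| "surv (Suc N) h pos = stp p q sg A 0 0 (surv N) h pos"

lemma surv_bnd: "0 \<le> surv N h pos \<and> surv N h pos \<le> 1"
proof (induction N arbitrary: h pos)
  case 0 then show ?case by simp
next
  case (Suc N)
  have b: "bndB 1 (surv N)" using Suc unfolding bndB_def by auto
  have "0 \<le> stp p q sg A 0 0 (surv N) h pos"
  proof (cases "sg h")
    case True then show ?thesis by (simp add: stp_def)
  next
    case False
    show ?thesis
      by (rule stp_ge_const[where \<sigma>=sg and h=h, OF b p0 less_imp_le[OF q0] False])
         (use Suc p0 q0 in \<open>auto simp: itg_def\<close>)
  qed
  moreover have "stp p q sg A 0 0 (surv N) h pos \<le> 1"
  proof (rule stp_le_const[OF b p0 less_imp_le[OF q0]])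
    fix k b
    have "p * surv N (h @ [(legal_pos pos k, b, True)]) (if b then legal_pos pos k + 1 else legal_pos pos k) \<le> p * 1"
      using Suc p0 by (intro mult_left_mono) auto
    moreover have "q * (if legal_pos pos k = 1 then 0 else surv N (h @ [(legal_pos pos k, b, False)]) (legal_pos pos k - 1)) \<le> q * 1"
      using Suc q0 by (intro mult_left_mono) auto
    ultimately show "itg p q 0 0 (surv N) h pos (k, b) \<le> 1" using pq1 by (simp add: itg_def)
  qed simp
  ultimately show ?case by simp
qed

lemma surv_bndB: "bndB 1 (surv N)"
  using surv_bnd unfolding bndB_def by (metis abs_of_nonneg)

lemma surv_sg: "sg h \<Longrightarrow> surv N h pos = 0"
  by (cases N) (auto simp: stp_def)

lemma surv_pos: "1 \<le> pos \<Longrightarrow> pos \<le> t \<Longrightarrow> surv t h pos \<le> 1 - q ^ pos"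
proof (induction t arbitrary: h pos)
  case 0 then show ?case by simp
next
  case (Suc t)
  have K0: "0 \<le> 1 - q ^ pos" using q0 q1 by (simp add: power_le_one)
  show ?case unfolding surv.simps
  proof (rule stp_le_const[OF surv_bndB p0 less_imp_le[OF q0] K0])
    fix k b
    define l where "l = legal_pos pos k"
    have l1: "1 \<le> l" and lp: "l \<le> pos" using Suc.prems legal_ge legal_le l_def by auto
    have A1: "p * surv t (h @ [(l, b, True)]) (if b then l + 1 else l) \<le> p"
      by (rule mult_left_le[OF conjunct2[OF surv_bnd] p0])
    have A2: "(if l = 1 then 0 else surv t (h @ [(l, b, False)]) (l - 1)) \<le> 1 - q ^ (pos - 1)"
    proof (cases "l = 1")
      case True then show ?thesis using q0 q1 by (simp add: power_le_one)
    next
      case False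
      then have "surv t (h @ [(l, b, False)]) (l - 1) \<le> 1 - q ^ (l - 1)"
        using Suc.IH l1 lp Suc.prems by auto
      moreover have "q ^ (pos - 1) \<le> q ^ (l - 1)" using q0 q1 lp
        by (intro power_decreasing) auto
      ultimately show ?thesis using False by simp
    qed
    have "q * (if l = 1 then 0 else surv t (h @ [(l, b, False)]) (l - 1)) \<le> q * (1 - q ^ (pos - 1))"
      using A2 q0 by (intro mult_left_mono) auto
    moreover have "q * q ^ (pos - 1) = q ^ pos" using Suc.prems
      by (metis Suc_diff_le diff_Suc_1 le_refl Suc_le_D power_Suc Suc_le_eq)
    ultimately have "p * surv t (h @ [(l, b, True)]) (if b then l + 1 else l) + q * (if l = 1 then 0 else surv t (h @ [(l, b, False)]) (l - 1)) \<le> 1 - q ^ pos"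
      using A1 pq1 by (simp add: algebra_simps)
    moreover have "itg p q 0 0 (surv t) h pos (k, b) = p * surv t (h @ [(l, b, True)]) (if b then l + 1 else l) + q * (if l = 1 then 0 else surv t (h @ [(l, b, False)]) (l - 1))"
      by (simp add: itg_def l_def)
    ultimately show "itg p q 0 0 (surv t) h pos (k, b) \<le> 1 - q ^ pos"
      by simp
  qed
qed

lemma sg_iff: "pos = curpos k0 h \<Longrightarrow> sg h \<longleftrightarrow> n < pos"
  by (simp add: sg_def)

lemma surv_n:
  assumes "pos = curpos k0 h" "1 \<le> pos"
  shows "surv n h pos \<le> 1 - q ^ n"
proof (cases "n < pos")
  case True
  then have "surv n h pos = 0" using sg_iff[OF assms(1)] surv_sg by simp
  then show ?thesis using q0 q1 by (simp add: power_le_one)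
next
  case False
  then have "surv n h pos \<le> 1 - q ^ pos" using surv_pos assms by simp
  moreover have "q ^ n \<le> q ^ pos" using False q0 q1 assms(2) by (intro power_decreasing) auto
  ultimately show ?thesis by simp
qed

lemma surv_mult:
  assumes "pos = curpos k0 h" "1 \<le> pos"
  shows "surv (a + n) h pos \<le> (1 - q ^ n) * surv a h pos"
  using assms
proof (induction a arbitrary: h pos)
  case 0
  show ?case
  proof (cases "sg h")
    case True then show ?thesis using surv_sg by simp
  next
    case False then show ?thesis using surv_n[OF 0] by simp
  qed
next
  case (Suc a)
  have b0: "0 \<le> 1 - q ^ n" and b1: "1 - q ^ n \<le> 1" using q0 q1 by (simp_all add: power_le_one)
  have bb: "bndB 1 (\<lambda>h pos. (1 - q ^ n) * surv a h pos)"
    unfolding bndB_def using surv_bnd b0 b1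
    by (metis abs_mult abs_of_nonneg mult_le_one)
  have "surv (Suc a + n) h pos = stp p q sg A 0 0 (surv (a + n)) h pos" by simp
  also have "\<dots> \<le> stp p q sg A 0 0 (\<lambda>h pos. (1 - q ^ n) * surv a h pos) h pos"
  proof (rule stp_mono[OF surv_bndB bb p0 less_imp_le[OF q0]])
    fix k b
    show "itg p q 0 0 (surv (a + n)) h pos (k, b) \<le> itg p q 0 0 (\<lambda>h pos. (1 - q ^ n) * surv a h pos) h pos (k, b)"
    proof (rule itg_mono_succ[OF p0 less_imp_le[OF q0]])
      show "1 \<le> pos" using Suc.prems by simp
      fix l bb assume "1 \<le> l" "l \<le> pos"
      then show "surv (a + n) (h @ [(l, bb, True)]) (if bb then l + 1 else l)
          \<le> (1 - q ^ n) * surv a (h @ [(l, bb, True)]) (if bb then l + 1 else l)"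
        by (intro Suc.IH) auto
    next
      fix l bb assume "2 \<le> l" "l \<le> pos"
      then show "surv (a + n) (h @ [(l, bb, False)]) (l - 1)
          \<le> (1 - q ^ n) * surv a (h @ [(l, bb, False)]) (l - 1)"
        by (intro Suc.IH) auto
    qed auto
  qed
  also have "\<dots> = (1 - q ^ n) * surv (Suc a) h pos"
    using stp_scale[of p q sg A "1 - q ^ n" 0 0 "surv a" h pos] by simp
  finally show ?case .
qed

lemma surv_geo:
  assumes "pos = curpos k0 h" "1 \<le> pos"
  shows "surv (a + j * n) h pos \<le> (1 - q ^ n) ^ j"
proof (induction j)
  case 0 then show ?case using surv_bnd by simp
next
  case (Suc j)
  have b0: "0 \<le> 1 - q ^ n" using q0 q1 by (simp add: power_le_one)
  have "surv (a + Suc j * n) h pos = surv ((a + j * n) + n) h pos" by (simp add: algebra_simps)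
  also have "\<dots> \<le> (1 - q ^ n) * surv (a + j * n) h pos" by (rule surv_mult[OF assms])
  also have "\<dots> \<le> (1 - q ^ n) * (1 - q ^ n) ^ j" using Suc b0 by (intro mult_left_mono)
  finally show ?case by simp
qed

lemma surv_div:
  assumes "pos = curpos k0 h" "1 \<le> pos"
  shows "surv N h pos \<le> (1 - q ^ n) ^ (N div n)"
  using surv_geo[OF assms, of "N mod n" "N div n"] by simp

lemma P_bnd: "\<bar>P N h pos\<bar> \<le> real N * (cc + r)"
proof (induction N arbitrary: h pos)
  case 0 then show ?case by simp
next
  case (Suc N)
  have b: "bndB (real N * (cc + r)) (P N)" using Suc unfolding bndB_def by blast
  have "\<bar>P (Suc N) h pos\<bar> \<le> \<bar>- cc\<bar> + p * (real N * (cc + r)) + q * (\<bar>r\<bar> + real N * (cc + r))"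
    unfolding P_Suc by (rule stp_abs[OF b p0 less_imp_le[OF q0]])
  also have "\<dots> = cc + q * r + (p + q) * (real N * (cc + r))"
    using cc0 rpos by (simp add: algebra_simps)
  also have "\<dots> \<le> real (Suc N) * (cc + r)"
    using pq1 q1 rpos by (simp add: algebra_simps)
  finally show ?case .
qed

lemma P_bndB: "bndB (real N * (cc + r)) (P N)"
  using P_bnd unfolding bndB_def by blast

lemma P_diff: "\<bar>P (Suc N) h pos - P N h pos\<bar> \<le> (cc + r) * surv N h pos"
proof (induction N arbitrary: h pos)
  case 0
  show ?case
  proof (cases "sg h")
    case True then show ?thesis by (simp add: P_Suc stp_def)
  next
    case False
    have b: "bndB 0 (P 0)" by (simp add: bndB_def)
    have "\<bar>P 1 h pos\<bar> \<le> \<bar>- cc\<bar> + p * 0 + q * (\<bar>r\<bar> + 0)"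
      unfolding One_nat_def P_Suc by (rule stp_abs[OF b p0 less_imp_le[OF q0]])
    also have "\<dots> \<le> cc + r" using cc0 rpos q1 by (simp add: mult_left_le_one_le)
    finally show ?thesis using False by simp
  qed
next
  case (Suc N)
  let ?D = "\<lambda>h pos. P (Suc N) h pos - 1 * P N h pos"
  let ?G = "\<lambda>h pos. (cc + r) * surv N h pos"
  have bD: "bndB (real (Suc N) * (cc + r) + real N * (cc + r)) ?D"
    unfolding bndB_def
  proof (intro allI)
    fix h pos
    have "\<bar>P (Suc N) h pos\<bar> \<le> real (Suc N) * (cc + r)" "\<bar>P N h pos\<bar> \<le> real N * (cc + r)" using P_bnd by blast+
    moreover have "\<bar>P (Suc N) h pos - 1 * P N h pos\<bar> \<le> \<bar>P (Suc N) h pos\<bar> + \<bar>P N h pos\<bar>"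
      using abs_triangle_ineq4[of "P (Suc N) h pos" "P N h pos"] by simp
    ultimately show "\<bar>P (Suc N) h pos - 1 * P N h pos\<bar> \<le> real (Suc N) * (cc + r) + real N * (cc + r)" by linarith
  qed
  have bG: "bndB (cc + r) ?G" unfolding bndB_def
  proof (intro allI)
    fix h pos
    have "0 \<le> surv N h pos" "surv N h pos \<le> 1" using surv_bnd by blast+
    moreover have "0 \<le> cc + r" using cc0 rpos by simp
    ultimately show "\<bar>(cc + r) * surv N h pos\<bar> \<le> cc + r"
      by (simp add: abs_mult mult_left_le)
  qed
  have e1: "P (Suc (Suc N)) h pos - P (Suc N) h pos = stp p q sg A 0 0 ?D h pos"
    using stp_lin[where \<sigma>=sg and A=A and aF="- cc" and rF=r and h=h and pos=pos and M=1 and aG="- cc" and rG=r,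
        OF P_bndB[of "Suc N"] P_bndB[of N] p0 less_imp_le[OF q0]]
    by (simp only: P_Suc[of "Suc N" h pos] P_Suc[of N h pos] mult_1_left diff_self minus_minus diff_minus_eq_add)
  have e2: "(cc + r) * surv (Suc N) h pos = stp p q sg A 0 0 ?G h pos"
    using stp_scale[of p q sg A "cc + r" 0 0 "surv N" h pos] by simp
  have e3: "- stp p q sg A 0 0 ?D h pos = stp p q sg A 0 0 (\<lambda>h pos. - 1 * ?D h pos) h pos"
    using stp_scale[of p q sg A "- 1" 0 0 ?D h pos] by simp
  have bD': "bndB (real (Suc N) * (cc + r) + real N * (cc + r)) (\<lambda>h pos. - 1 * ?D h pos)"
    using bD unfolding bndB_def by (simp only: mult_minus1 abs_minus_cancel) simp
  have m1: "stp p q sg A 0 0 ?D h pos \<le> stp p q sg A 0 0 ?G h pos"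
    by (rule stp_mono[OF bD bG p0 less_imp_le[OF q0]], rule itg_mono_all[OF p0 less_imp_le[OF q0]])
       (use Suc.IH in \<open>auto simp: abs_le_iff\<close>)
  have m2: "stp p q sg A 0 0 (\<lambda>h pos. - 1 * ?D h pos) h pos \<le> stp p q sg A 0 0 ?G h pos"
    by (rule stp_mono[OF bD' bG p0 less_imp_le[OF q0]], rule itg_mono_all[OF p0 less_imp_le[OF q0]])
       (use Suc.IH in \<open>auto simp: abs_le_iff\<close>)
  show ?case using m1 m2 e1 e2 e3 by linarith
qed

lemma P_lower:
  fixes V :: "nat \<Rightarrow> real" and M :: real
  assumes V0: "\<And>j. 0 \<le> V j" and VM: "\<And>j. V j \<le> M"
    and Vanti: "\<And>i j. i \<le> j \<Longrightarrow> V j \<le> V i" and Vr: "V 0 \<le> r"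
    and Vout: "\<And>j. n < j \<Longrightarrow> V j = 0"
    and Vsub: "\<And>j. 1 \<le> j \<Longrightarrow> j \<le> n \<Longrightarrow> V j \<le> - cc + p * V (Suc j) + q * V (j - 1)"
  shows "pos = curpos k0 h \<Longrightarrow> 1 \<le> pos \<Longrightarrow> V pos - M * surv N h pos \<le> P N h pos"
proof (induction N arbitrary: h pos)
  case 0
  show ?case
  proof (cases "sg h")
    case True then have "n < pos" using sg_iff[OF 0(1)] by simp
    then show ?thesis using True Vout by simp
  next
    case False then show ?thesis using VM by simp
  qed
next
  case (Suc N)
  show ?case
  proof (cases "sg h")
    case True then have "n < pos" using sg_iff[OF Suc(2)] by simp
    then show ?thesis using True Vout surv_sg[OF True] by (simp add: P_Suc stp_def)
  next
    case False
    then have pn: "pos \<le> n" using sg_iff[OF Suc(2)] by simp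
    let ?W = "\<lambda>h pos. V pos - M * surv N h pos"
    have M0: "0 \<le> M" using V0 VM order_trans by blast
    have bW: "bndB (M + M) ?W" unfolding bndB_def
    proof (intro allI)
      fix h pos
      have "0 \<le> surv N h pos" "surv N h pos \<le> 1" using surv_bnd by blast+
      then have "0 \<le> M * surv N h pos" "M * surv N h pos \<le> M" using M0 by (simp_all add: mult_left_le)
      then show "\<bar>V pos - M * surv N h pos\<bar> \<le> M + M" using V0[of pos] VM[of pos] by arith
    qed
    have bV: "bndB M (\<lambda>h pos. V pos)" unfolding bndB_def using V0 VM by (simp add: abs_of_nonneg)
    have s1: "stp p q sg A (- cc) r ?W h pos \<le> stp p q sg A (- cc) r (P N) h pos"
    proof (rule stp_mono[OF bW P_bndB p0 less_imp_le[OF q0]])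
      fix k b
      show "itg p q (- cc) r ?W h pos (k, b) \<le> itg p q (- cc) r (P N) h pos (k, b)"
      proof (rule itg_mono_succ[OF p0 less_imp_le[OF q0]])
        show "1 \<le> pos" using Suc.prems by simp
        fix l bb assume "1 \<le> l" "l \<le> pos"
        then show "?W (h @ [(l, bb, True)]) (if bb then l + 1 else l)
            \<le> P N (h @ [(l, bb, True)]) (if bb then l + 1 else l)"
          by (intro Suc.IH) auto
      next
        fix l bb assume "2 \<le> l" "l \<le> pos"
        then show "?W (h @ [(l, bb, False)]) (l - 1) \<le> P N (h @ [(l, bb, False)]) (l - 1)"
          by (intro Suc.IH) auto
      qed auto
    qed
    have s2: "stp p q sg A (- cc) r (\<lambda>h pos. V pos) h pos - M * stp p q sg A 0 0 (surv N) h pos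
        = stp p q sg A (- cc) r ?W h pos"
      using stp_lin[where \<sigma>=sg and A=A and aF="- cc" and rF=r and h=h and pos=pos and M=M and aG=0 and rG=0,
        OF bV surv_bndB p0 less_imp_le[OF q0]]
      by (simp only: mult_zero_right diff_zero)
    have s3: "V pos \<le> stp p q sg A (- cc) r (\<lambda>h pos. V pos) h pos"
    proof (rule stp_ge_const[where \<sigma>=sg and h=h, OF bV p0 less_imp_le[OF q0] False])
      fix k b
      define l where "l = legal_pos pos k"
      have l1: "1 \<le> l" and lp: "l \<le> pos" using Suc.prems legal_ge legal_le l_def by auto
      have a1: "V (Suc pos) \<le> V (if b then l + 1 else l)" using lp by (intro Vanti) auto
      have a2: "V (pos - 1) \<le> (if l = 1 then r else V (l - 1))"
      proof (cases "l = 1")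
        case True then show ?thesis using Vanti[of 0 "pos - 1"] Vr by simp
      next
        case False then show ?thesis using lp by (simp add: Vanti)
      qed
      have "p * V (Suc pos) \<le> p * V (if b then l + 1 else l)" using a1 p0 by (rule mult_left_mono)
      moreover have "q * V (pos - 1) \<le> q * (if l = 1 then r else V (l - 1))" using a2 q0 by (simp add: mult_left_mono)
      moreover have "V pos \<le> - cc + p * V (Suc pos) + q * V (pos - 1)" using Vsub Suc.prems pn by simp
      ultimately show "V pos \<le> itg p q (- cc) r (\<lambda>h pos. V pos) h pos (k, b)"
        unfolding itg_def prod.case l_def[symmetric] by linarith
    qed
    have "V pos - M * surv (Suc N) h pos = V pos - M * stp p q sg A 0 0 (surv N) h pos" by simp
    also have "\<dots> \<le> stp p q sg A (- cc) r ?W h pos" using s2 s3 by linarith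
    also have "\<dots> \<le> P (Suc N) h pos" using s1 by (simp add: P_Suc)
    finally show ?thesis .
  qed
qed

lemma beta_facts: "0 < 1 - q ^ n" "1 - q ^ n < 1"
proof -
  have "q ^ n < 1" using q0 q1 n1 by (simp add: power_less_one_iff)
  moreover have "0 < q ^ n" using q0 by simp
  ultimately show "0 < 1 - q ^ n" "1 - q ^ n < 1" by simp_all
qed

lemma gamma_facts: "0 \<le> (1 - q ^ n) powr (1 / real n)" "(1 - q ^ n) powr (1 / real n) < 1"
proof -
  show "0 \<le> (1 - q ^ n) powr (1 / real n)" by simp
  have "(1 - q ^ n) powr (1 / real n) < 1 powr (1 / real n)"
    using beta_facts n1 by (intro powr_less_mono2) auto
  then show "(1 - q ^ n) powr (1 / real n) < 1" by simp
qed

lemma surv_bound_geo: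
  assumes "1 \<le> k0"
  shows "surv N [] k0 \<le> ((1 - q ^ n) powr (1 / real n)) ^ N / (1 - q ^ n)"
proof -
  have "surv N [] k0 \<le> (1 - q ^ n) ^ (N div n)"
    by (rule surv_div) (use assms in \<open>auto simp: curpos_def\<close>)
  also have "\<dots> \<le> ((1 - q ^ n) powr (1 / real n)) ^ N / (1 - q ^ n)"
    by (rule geo_div[OF beta_facts n1])
  finally show ?thesis .
qed

lemma surv_lim:
  assumes "1 \<le> k0"
  shows "(\<lambda>N. surv N [] k0) \<longlonglongrightarrow> 0"
proof (rule tendsto_sandwich[of "\<lambda>_. 0" _ _ "\<lambda>N. ((1 - q ^ n) powr (1 / real n)) ^ N / (1 - q ^ n)"])
  show "\<forall>\<^sub>F N in sequentially. 0 \<le> surv N [] k0" using surv_bnd by simp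
  show "\<forall>\<^sub>F N in sequentially. surv N [] k0 \<le> ((1 - q ^ n) powr (1 / real n)) ^ N / (1 - q ^ n)"
    using surv_bound_geo[OF assms] by simp
  show "(\<lambda>N. ((1 - q ^ n) powr (1 / real n)) ^ N / (1 - q ^ n)) \<longlonglongrightarrow> 0"
    using LIMSEQ_power_zero[of "(1 - q ^ n) powr (1 / real n)"] gamma_facts
    by (intro tendsto_divide_zero) simp
qed simp

lemma P_summable:
  assumes "1 \<le> k0"
  shows "summable (\<lambda>i. P (Suc i) [] k0 - P i [] k0)"
proof (rule summable_comparison_test')
  let ?g = "\<lambda>i. (cc + r) * (((1 - q ^ n) powr (1 / real n)) ^ i / (1 - q ^ n))"
  show "summable ?g"
    using gamma_facts by (intro summable_mult summable_divide summable_geometric) simp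
  fix i :: nat
  have "norm (P (Suc i) [] k0 - P i [] k0) \<le> (cc + r) * surv i [] k0" using P_diff by simp
  also have "\<dots> \<le> ?g i" using surv_bound_geo[OF assms] cc0 rpos by (intro mult_left_mono) auto
  finally show "norm (P (Suc i) [] k0 - P i [] k0) \<le> ?g i" .
qed

lemma loc_main:
  fixes V :: "nat \<Rightarrow> real" and M :: real
  assumes k: "1 \<le> k0"
  assumes V0: "\<And>j. 0 \<le> V j" and VM: "\<And>j. V j \<le> M"
    and Vanti: "\<And>i j. i \<le> j \<Longrightarrow> V j \<le> V i" and Vr: "V 0 \<le> r"
    and Vout: "\<And>j. n < j \<Longrightarrow> V j = 0"
    and Vsub: "\<And>j. 1 \<le> j \<Longrightarrow> j \<le> n \<Longrightarrow> V j \<le> - cc + p * V (Suc j) + q * V (j - 1)"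
  shows "\<exists>L. has_payoff lam mu c r sg A k0 L \<and> V k0 \<le> L"
proof -
  let ?d = "\<lambda>i. P (Suc i) [] k0 - P i [] k0"
  have eq: "(\<lambda>N. P N [] k0) = (\<lambda>N. \<Sum>i<N. ?d i)"
    by (rule ext) (simp add: sum_lessThan_telescope[of "\<lambda>i. P i [] k0"])
  have lim: "(\<lambda>N. P N [] k0) \<longlonglongrightarrow> suminf ?d"
    unfolding eq by (rule summable_LIMSEQ[OF P_summable[OF k]])
  have l2: "(\<lambda>N. V k0 - M * surv N [] k0) \<longlonglongrightarrow> V k0 - M * 0"
    by (intro tendsto_intros surv_lim[OF k])
  have "V k0 - M * 0 \<le> suminf ?d"
  proof (rule LIMSEQ_le[OF l2 lim])
    show "\<exists>N. \<forall>m\<ge>N. V k0 - M * surv m [] k0 \<le> P m [] k0"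
      using P_lower[OF V0 VM Vanti Vr Vout Vsub, of k0 "[]"] k by (auto simp: curpos_def)
  qed
  then show ?thesis using lim unfolding has_payoff_def by auto
qed

end


context tq begin

declare hit0_fin.simps(2)[simp del] steps_fin.simps(2)[simp del]

abbreviation "H N i \<equiv> hit0_fin lam mu n N i"
abbreviation "St N i \<equiv> steps_fin lam mu n N i"

lemma H_Suc: "H (Suc N) i = (if i = 0 then 1 else if i = n then 0 else p * H N (up_st n i) + q * H N (down_st n i))"
  by (simp add: hit0_fin.simps(2) p_def q_def)

lemma St_Suc: "St (Suc N) i = (if i = 0 \<or> i = n then 0 else 1 + p * St N (up_st n i) + q * St N (down_st n i))"
  by (simp add: steps_fin.simps(2) p_def q_def)

lemma up_in: "i < n \<Longrightarrow> up_st n i = Suc i" by (simp add: up_st_def)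
lemma down_in: "down_st n i = i - 1" by (simp add: down_st_def)

lemma H_bnd: "0 \<le> H N i \<and> H N i \<le> 1"
proof (induction N arbitrary: i)
  case 0 then show ?case by simp
next
  case (Suc N)
  have "0 \<le> p * H N (up_st n i) + q * H N (down_st n i)" using Suc p0 q0 by simp
  moreover have "p * H N (up_st n i) + q * H N (down_st n i) \<le> p * 1 + q * 1"
    using Suc p0 q0 by (intro add_mono mult_left_mono) auto
  ultimately show ?case using pq1 by (simp add: H_Suc)
qed

lemma H_mono: "H N i \<le> H (Suc N) i"
proof (induction N arbitrary: i)
  case 0
  have "0 \<le> p * H 0 (up_st n i) + q * H 0 (down_st n i)" using H_bnd p0 q0 by simp
  then show ?case by (simp add: H_Suc)
next
  case (Suc N)
  have "p * H N (up_st n i) + q * H N (down_st n i) \<le> p * H (Suc N) (up_st n i) + q * H (Suc N) (down_st n i)"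
    using Suc p0 q0 by (intro add_mono mult_left_mono) auto
  then show ?case by (simp add: H_Suc[of "Suc N"] H_Suc[of N])
qed

definition ha :: "nat \<Rightarrow> real" where "ha i = lim (\<lambda>N. H N i)"

lemma H_lim: "(\<lambda>N. H N i) \<longlonglongrightarrow> ha i"
proof -
  have "incseq (\<lambda>N. H N i)" using H_mono by (simp add: incseq_SucI)
  moreover have "\<forall>N. H N i \<le> 1" using H_bnd by blast
  ultimately obtain L where "(\<lambda>N. H N i) \<longlonglongrightarrow> L" "\<forall>N. H N i \<le> L" by (rule incseq_convergent)
  then show ?thesis unfolding ha_def by (simp add: limI)
qed

lemma ha_bnd: "0 \<le> ha i" "ha i \<le> 1"
proof -
  show "0 \<le> ha i" by (rule LIMSEQ_le_const[OF H_lim]) (use H_bnd in auto)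
  show "ha i \<le> 1" by (rule LIMSEQ_le_const2[OF H_lim]) (use H_bnd in auto)
qed

lemma ha0: "ha 0 = 1"
proof -
  have "H N 0 = 1" for N by (cases N) (simp_all add: H_Suc)
  then have "(\<lambda>N. H N 0) = (\<lambda>N. 1)" by (rule ext)
  then show ?thesis using H_lim[of 0] n1 by (simp add: LIMSEQ_const_iff)
qed

lemma han: "ha n = 0"
proof -
  have "H N n = 0" for N using n1 by (cases N) (simp_all add: H_Suc)
  then have "(\<lambda>N. H N n) = (\<lambda>N. 0)" by (rule ext)
  then show ?thesis using H_lim[of n] n1 by (simp add: LIMSEQ_const_iff)
qed

lemma ha_rec: "0 < i \<Longrightarrow> i < n \<Longrightarrow> ha i = p * ha (Suc i) + q * ha (i - 1)"
proof -
  assume i: "0 < i" "i < n"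
  have "(\<lambda>N. H (Suc N) i) \<longlonglongrightarrow> ha i" using H_lim LIMSEQ_Suc by blast
  moreover have "(\<lambda>N. H (Suc N) i) = (\<lambda>N. p * H N (Suc i) + q * H N (i - 1))"
    using i by (simp add: H_Suc up_in down_in)
  moreover have "(\<lambda>N. p * H N (Suc i) + q * H N (i - 1)) \<longlonglongrightarrow> p * ha (Suc i) + q * ha (i - 1)"
    by (intro tendsto_intros H_lim)
  ultimately show ?thesis using LIMSEQ_unique by metis
qed

definition zz :: real where "zz = 2 / p"
definition phi :: "nat \<Rightarrow> real" where "phi i = zz ^ n - zz ^ i"

lemma p_pos: "p > 0" using lam mu by (simp add: p_def)
lemma p1: "p \<le> 1" using pq1 q0 by simp
lemma zz2: "zz \<ge> 2" using p_pos p1 by (simp add: zz_def field_simps)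

lemma St_nonneg: "0 \<le> St N i"
proof (induction N arbitrary: i)
  case 0 then show ?case by simp
next
  case (Suc N) then show ?case using p0 q0 by (simp add: St_Suc add_nonneg_nonneg)
qed

lemma St_mono: "St N i \<le> St (Suc N) i"
proof (induction N arbitrary: i)
  case 0
  then show ?case using St_nonneg by (simp add: St_Suc)
next
  case (Suc N)
  have "p * St N (up_st n i) + q * St N (down_st n i) \<le> p * St (Suc N) (up_st n i) + q * St (Suc N) (down_st n i)"
    using Suc p0 q0 by (intro add_mono mult_left_mono) auto
  then show ?case by (simp add: St_Suc[of "Suc N"] St_Suc[of N])
qed

lemma phi_nonneg: "i \<le> n \<Longrightarrow> 0 \<le> phi i"
  using zz2 by (simp add: phi_def power_increasing)

lemma St_bnd: "i \<le> n \<Longrightarrow> St N i \<le> phi i"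
proof (induction N arbitrary: i)
  case 0 then show ?case using phi_nonneg by simp
next
  case (Suc N)
  show ?case
  proof (cases "i = 0 \<or> i = n")
    case True then show ?thesis using phi_nonneg Suc.prems by (auto simp: St_Suc)
  next
    case False
    then have i: "0 < i" "i < n" using Suc.prems by auto
    have e: "St (Suc N) i = 1 + p * St N (Suc i) + q * St N (i - 1)"
      using False i by (simp add: St_Suc up_in down_in)
    have "p * St N (Suc i) + q * St N (i - 1) \<le> p * phi (Suc i) + q * phi (i - 1)"
      using Suc.IH i p0 q0 by (intro add_mono mult_left_mono) auto
    moreover have "1 + p * phi (Suc i) + q * phi (i - 1) \<le> phi i"
    proof -
      have z0: "zz > 0" using zz2 by simp
      have "p * zz ^ Suc i = 2 * zz ^ i" using p_pos by (simp add: zz_def)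
      moreover have "1 \<le> zz ^ i" using zz2 by (simp add: one_le_power)
      moreover have "0 \<le> q * zz ^ (i - 1)" using q0 z0 by simp
      ultimately have "zz ^ i + 1 \<le> p * zz ^ Suc i + q * zz ^ (i - 1)" by linarith
      moreover have "p * (zz ^ n - zz ^ Suc i) + q * (zz ^ n - zz ^ (i - 1)) = (p + q) * zz ^ n - (p * zz ^ Suc i + q * zz ^ (i - 1))"
        by (simp add: algebra_simps)
      ultimately show ?thesis using pq1 unfolding phi_def by simp
    qed
    ultimately show ?thesis using e by linarith
  qed
qed

definition ts :: "nat \<Rightarrow> real" where "ts i = lim (\<lambda>N. St N i)"

lemma St_lim: "i \<le> n \<Longrightarrow> (\<lambda>N. St N i) \<longlonglongrightarrow> ts i"
proof -
  assume i: "i \<le> n"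
  have "incseq (\<lambda>N. St N i)" using St_mono by (simp add: incseq_SucI)
  moreover have "\<forall>N. St N i \<le> phi i" using St_bnd[OF i] by blast
  ultimately obtain L where "(\<lambda>N. St N i) \<longlonglongrightarrow> L" "\<forall>N. St N i \<le> L" by (rule incseq_convergent)
  then show ?thesis unfolding ts_def by (simp add: limI)
qed

lemma ts0: "ts 0 = 0"
proof -
  have "St N 0 = 0" for N by (cases N) (simp_all add: St_Suc)
  then have "(\<lambda>N. St N 0) = (\<lambda>N. 0)" by (rule ext)
  then show ?thesis using St_lim[of 0] n1 by (simp add: LIMSEQ_const_iff)
qed

lemma tsn: "ts n = 0"
proof -
  have "St N n = 0" for N by (cases N) (simp_all add: St_Suc)
  then have "(\<lambda>N. St N n) = (\<lambda>N. 0)" by (rule ext)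
  then show ?thesis using St_lim[of n] n1 by (simp add: LIMSEQ_const_iff)
qed

lemma ts_rec: "0 < i \<Longrightarrow> i < n \<Longrightarrow> ts i = 1 + p * ts (Suc i) + q * ts (i - 1)"
proof -
  assume i: "0 < i" "i < n"
  have "(\<lambda>N. St N i) \<longlonglongrightarrow> ts i" using i by (intro St_lim) simp
  then have "(\<lambda>N. St (Suc N) i) \<longlonglongrightarrow> ts i" by (rule LIMSEQ_Suc)
  moreover have "(\<lambda>N. St (Suc N) i) = (\<lambda>N. 1 + p * St N (Suc i) + q * St N (i - 1))"
    using i by (simp add: St_Suc up_in down_in)
  moreover have "(\<lambda>N. 1 + p * St N (Suc i) + q * St N (i - 1)) \<longlonglongrightarrow> 1 + p * ts (Suc i) + q * ts (i - 1)"
    using i by (intro tendsto_intros St_lim) auto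
  ultimately show ?thesis using LIMSEQ_unique by metis
qed

lemma theta_eq: "theta lam mu n = q * ha (n - 1)"
proof -
  have "(\<lambda>N. p * H N (up_st n n) + q * H N (down_st n n)) \<longlonglongrightarrow> p * ha n + q * ha (n - 1)"
    using n1 by (simp add: up_st_def down_in) (intro tendsto_intros H_lim)
  then show ?thesis unfolding theta_def p_def[symmetric] q_def[symmetric] using han by (simp add: limI)
qed

lemma T_eq: "Tsteps lam mu n = 1 + q * ts (n - 1)"
proof -
  have "(\<lambda>N. 1 + p * St N (up_st n n) + q * St N (down_st n n)) \<longlonglongrightarrow> 1 + p * ts n + q * ts (n - 1)"
    using n1 by (simp add: up_st_def down_in) (intro tendsto_intros St_lim, auto)
  then show ?thesis unfolding Tsteps_def p_def[symmetric] q_def[symmetric] using tsn by (simp add: limI)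
qed

lemma D_eq: "D lam mu c r n = q * (r * ha (n - 1) - cc * ts (n - 1)) - cc"
  unfolding D_def theta_eq T_eq cc_def[symmetric] by (simp add: algebra_simps)

definition xx :: real where "xx = D lam mu c r n / (1 - q * (1 - ha (n - 1)))"
definition Vf :: "nat \<Rightarrow> real" where
  "Vf j = (if j \<le> n then r * ha j - cc * ts j + xx * (1 - ha j) else 0)"

lemma den_pos: "0 < 1 - q * (1 - ha (n - 1))"
proof -
  have "q * (1 - ha (n - 1)) \<le> q * 1" using ha_bnd q0 by (intro mult_left_mono) auto
  then show ?thesis using q1 by simp
qed

lemma xx_eq: "xx * (1 - q * (1 - ha (n - 1))) = D lam mu c r n"
  using den_pos unfolding xx_def by simp

lemma Vn: "Vf n = xx" by (simp add: Vf_def han tsn)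
lemma V0: "Vf 0 = r" by (simp add: Vf_def ha0 ts0)

lemma V_eq:
  assumes "1 \<le> j" "j \<le> n"
  shows "Vf j = - cc + p * Vf (Suc j) + q * Vf (j - 1)"
proof (cases "j = n")
  case True
  have vn1: "Vf (n - 1) = r * ha (n - 1) - cc * ts (n - 1) + xx * (1 - ha (n - 1))" by (simp add: Vf_def)
  have vs: "Vf (Suc n) = 0" by (simp add: Vf_def)
  define f where "f = r * ha (n - 1) - cc * ts (n - 1)"
  have "- cc + p * Vf (Suc n) + q * Vf (n - 1) = (q * f - cc) + q * xx * (1 - ha (n - 1))"
    unfolding vs vn1 f_def by (simp add: algebra_simps)
  also have "\<dots> = xx * (1 - q * (1 - ha (n - 1))) + q * xx * (1 - ha (n - 1))"
    using xx_eq D_eq f_def by simp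
  also have "\<dots> = xx" by (simp add: algebra_simps)
  finally show ?thesis using True Vn by simp
next
  case False
  then have j: "0 < j" "j < n" using assms by auto
  have q: "q = 1 - p" using pq1 by simp
  have e1: "ha j = p * ha (Suc j) + q * ha (j - 1)" using ha_rec j by simp
  have e2: "ts j = 1 + p * ts (Suc j) + q * ts (j - 1)" using ts_rec j by simp
  have v1: "Vf j = r * ha j - cc * ts j + xx * (1 - ha j)" using j by (simp add: Vf_def)
  have v2: "Vf (Suc j) = r * ha (Suc j) - cc * ts (Suc j) + xx * (1 - ha (Suc j))" using j by (simp add: Vf_def)
  have v3: "Vf (j - 1) = r * ha (j - 1) - cc * ts (j - 1) + xx * (1 - ha (j - 1))" using j by (simp add: Vf_def)
  show ?thesis by (simp only: v1 v2 v3 e1 e2 q) (simp add: algebra_simps)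
qed

lemma xx_nonneg: "D lam mu c r n \<ge> 0 \<Longrightarrow> 0 \<le> xx"
  using den_pos unfolding xx_def by simp

lemma V_step_back:
  assumes D0: "D lam mu c r n \<ge> 0"
  shows "m \<le> n \<Longrightarrow> Vf (Suc (n - m)) \<le> Vf (n - m)"
proof (induction m)
  case 0 then show ?case using xx_nonneg[OF D0] Vn by (simp add: Vf_def)
next
  case (Suc m)
  define j where "j = n - m"
  have j1: "1 \<le> j" "j \<le> n" using Suc.prems j_def by auto
  have jm: "n - Suc m = j - 1" "Suc (n - Suc m) = j" using Suc.prems j_def by auto
  have ih: "Vf (Suc j) \<le> Vf j" using Suc j_def by simp
  have eq: "Vf j = - cc + p * Vf (Suc j) + q * Vf (j - 1)" by (rule V_eq[OF j1])
  have "q * Vf j + p * Vf j = Vf j" using pq1 by (metis distrib_right mult_1 add.commute)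
  moreover have "q * (Vf (j - 1) - Vf j) = q * Vf (j - 1) - q * Vf j" "p * (Vf j - Vf (Suc j)) = p * Vf j - p * Vf (Suc j)"
    by (simp_all add: algebra_simps)
  ultimately have "q * (Vf (j - 1) - Vf j) = p * (Vf j - Vf (Suc j)) + cc" using eq by linarith
  moreover have "0 \<le> p * (Vf j - Vf (Suc j))" using ih p0 by simp
  ultimately have "0 < q * (Vf (j - 1) - Vf j)" using cc0 by linarith
  then have "0 < Vf (j - 1) - Vf j" using q0 by (simp add: zero_less_mult_iff)
  moreover have "Suc (j - 1) = j" using j1 by simp
  ultimately show ?case using jm by simp
qed

lemma V_dec: assumes "D lam mu c r n \<ge> 0" shows "decseq Vf"
proof (rule decseq_SucI)
  fix j
  show "Vf (Suc j) \<le> Vf j"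
  proof (cases "j \<le> n")
    case True
    then show ?thesis using V_step_back[OF assms, of "n - j"] by simp
  next
    case False then show ?thesis by (simp add: Vf_def)
  qed
qed

lemma final_loc:
  assumes "1 \<le> k0" "k0 \<le> n" "D lam mu c r n \<ge> 0"
  shows "\<exists>L. has_payoff lam mu c r sg A k0 L \<and> 0 \<le> L \<and> (D lam mu c r n > 0 \<longrightarrow> 0 < L)"
proof -
  have dec: "decseq Vf" by (rule V_dec[OF assms(3)])
  have anti: "\<And>i j. i \<le> j \<Longrightarrow> Vf j \<le> Vf i" using dec by (simp add: decseqD)
  have nn: "0 \<le> Vf j" for j
  proof (cases "j \<le> n")
    case True then show ?thesis using anti[OF True] Vn xx_nonneg[OF assms(3)] by simp
  next
    case False then show ?thesis by (simp add: Vf_def)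
  qed
  have VM: "Vf j \<le> r" for j using anti[of 0 j] V0 by simp
  have Vr: "Vf 0 \<le> r" using V0 by simp
  have Vout: "\<And>j. n < j \<Longrightarrow> Vf j = 0" by (simp add: Vf_def)
  have Vsub: "\<And>j. 1 \<le> j \<Longrightarrow> j \<le> n \<Longrightarrow> Vf j \<le> - cc + p * Vf (Suc j) + q * Vf (j - 1)"
    using V_eq by simp
  obtain L where L: "has_payoff lam mu c r sg A k0 L" "Vf k0 \<le> L"
    using loc_main[OF assms(1) nn VM anti Vr Vout Vsub] by blast
  have "xx \<le> Vf k0" using anti[OF assms(2)] Vn by simp
  moreover have "D lam mu c r n > 0 \<Longrightarrow> 0 < xx" using den_pos unfolding xx_def by simp
  ultimately show ?thesis using L nn[of k0] by (intro exI[of _ L]) auto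
qed

end


theorem lemma2:
  fixes lam mu c r :: real and nstar :: nat
  assumes "lam > 0" and "mu > 0" and "c > 0" and "r > 0"
    and "opt_threshold lam mu c r nstar"
  shows "\<forall>k. 1 \<le> k \<and> k \<le> nstar \<longrightarrow>
           (\<forall>A :: adversary. \<exists>\<sigma> :: tstrategy. \<not> \<sigma> [] \<and>
              (\<exists>L. has_payoff lam mu c r \<sigma> A k L \<and> L \<ge> 0)
              \<and> (D lam mu c r nstar > 0 \<longrightarrow> (\<exists>L. has_payoff lam mu c r \<sigma> A k L \<and> L > 0)))"
proof (intro allI impI)
  fix k :: nat and A :: adversary
  assume k: "1 \<le> k \<and> k \<le> nstar"
  interpret tq lam mu c r A nstar k
    using assms k by unfold_locales auto
  have D0: "D lam mu c r nstar \<ge> 0" using assms(5) unfolding opt_threshold_def by simp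
  obtain L where L: "has_payoff lam mu c r sg A k L" "0 \<le> L" "D lam mu c r nstar > 0 \<longrightarrow> 0 < L"
    using final_loc[OF _ _ D0] k by blast
  have "\<not> sg []" using k by (simp add: sg_def curpos_def)
  then show "\<exists>\<sigma> :: tstrategy. \<not> \<sigma> [] \<and>
              (\<exists>L. has_payoff lam mu c r \<sigma> A k L \<and> L \<ge> 0)
              \<and> (D lam mu c r nstar > 0 \<longrightarrow> (\<exists>L. has_payoff lam mu c r \<sigma> A k L \<and> L > 0))"
    using L by blast
qed

end
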